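(* Let $\pi:(X,T)\to(Y,S)$ be an almost one-to-one factor map between minimal systems. Then $(X,T)$ is syndetically equicontinuous if and only if $(Y,S)$ is syndetically equicontinuous.
   Context: Systems: compact metric $(X,\varrho)$ with continuous surjection; minimal: every orbit dense. Factor map: continuous surjection $\pi$ with $\pi\circ T=S\circ\pi$; almost one-to-one: $\{y\in Y:\pi^{-1}(y)\text{ is a singleton}\}$ is dense in $Y$. $S_T(U,\delta)=\{n\in\mathbb{N}:\exists x_1,x_2\in U,\ \varrho(T^nx_1,T^nx_2)>\delta\}$, $J_T(U,\delta)=\mathbb N\setminus S_T(U,\delta)$. A point $x$ is syndetically equicontinuous if for every $\varepsilon>0$ some neighborhood $U$ of $x$ has $J_T(U,\varepsilon)$ syndetic (bounded gaps); a system is syndetically equicontinuous if every point is. *)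

theory Defs
  imports "HOL-Analysis.Analysis"
begin

definition dyn_system :: "'a::metric_space set \<Rightarrow> ('a \<Rightarrow> 'a) \<Rightarrow> bool" where
  "dyn_system X T \<longleftrightarrow> compact X \<and> continuous_on X T \<and> T ` X = X"

definition minimal_system :: "'a::metric_space set \<Rightarrow> ('a \<Rightarrow> 'a) \<Rightarrow> bool" where
  "minimal_system X T \<longleftrightarrow> dyn_system X T \<and>
     (\<forall>x\<in>X. X \<subseteq> closure {(T ^^ n) x | n. True})"

definition factor_map ::
  "'a::metric_space set \<Rightarrow> ('a \<Rightarrow> 'a) \<Rightarrow> 'b::metric_space set \<Rightarrow> ('b \<Rightarrow> 'b) \<Rightarrow> ('a \<Rightarrow> 'b) \<Rightarrow> bool" where
  "factor_map X T Y S \<pi> \<longleftrightarrow> continuous_on X \<pi> \<and> \<pi> ` X = Y \<and> (\<forall>x\<in>X. \<pi> (T x) = S (\<pi> x))"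

definition almost_one_to_one ::
  "'a::metric_space set \<Rightarrow> ('a \<Rightarrow> 'a) \<Rightarrow> 'b::metric_space set \<Rightarrow> ('b \<Rightarrow> 'b) \<Rightarrow> ('a \<Rightarrow> 'b) \<Rightarrow> bool" where
  "almost_one_to_one X T Y S \<pi> \<longleftrightarrow> factor_map X T Y S \<pi> \<and>
     Y \<subseteq> closure {y\<in>Y. \<exists>!x. x \<in> X \<and> \<pi> x = y}"

definition S_set :: "('a::metric_space \<Rightarrow> 'a) \<Rightarrow> 'a set \<Rightarrow> real \<Rightarrow> nat set" where
  "S_set T U \<delta> = {n. \<exists>x1\<in>U. \<exists>x2\<in>U. dist ((T ^^ n) x1) ((T ^^ n) x2) > \<delta>}"

definition J_set :: "('a::metric_space \<Rightarrow> 'a) \<Rightarrow> 'a set \<Rightarrow> real \<Rightarrow> nat set" where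
  "J_set T U \<delta> = UNIV - S_set T U \<delta>"

definition syndetic :: "nat set \<Rightarrow> bool" where
  "syndetic A \<longleftrightarrow> (\<exists>L>0. \<forall>n. \<exists>m\<in>A. n \<le> m \<and> m < n + L)"

definition nbhd_in :: "'a::metric_space set \<Rightarrow> 'a \<Rightarrow> 'a set \<Rightarrow> bool" where
  "nbhd_in X x U \<longleftrightarrow> U \<subseteq> X \<and> (\<exists>V. openin (top_of_set X) V \<and> x \<in> V \<and> V \<subseteq> U)"

definition synd_equicont_point :: "'a::metric_space set \<Rightarrow> ('a \<Rightarrow> 'a) \<Rightarrow> 'a \<Rightarrow> bool" where
  "synd_equicont_point X T x \<longleftrightarrow>
     (\<forall>\<epsilon>>0. \<exists>U. nbhd_in X x U \<and> syndetic (J_set T U \<epsilon>))"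

definition synd_equicont :: "'a::metric_space set \<Rightarrow> ('a \<Rightarrow> 'a) \<Rightarrow> bool" where
  "synd_equicont X T \<longleftrightarrow> (\<forall>x\<in>X. synd_equicont_point X T x)"

end

theory Submission
  imports Defs
begin

lemma syndetic_mono: "syndetic A \<Longrightarrow> A \<subseteq> B \<Longrightarrow> syndetic B"
  unfolding syndetic_def by blast

lemma syndetic_shift:
  assumes "syndetic A" "\<And>n. n \<in> A \<Longrightarrow> k n \<le> K"
  shows "syndetic ((\<lambda>n. n + k n) ` A)"
proof -
  obtain L where L: "L > 0" "\<And>n. \<exists>m\<in>A. n \<le> m \<and> m < n + L"
    using assms(1) unfolding syndetic_def by blast
  show ?thesis unfolding syndetic_def
  proof (intro exI[of _ "L + K"] conjI allI)
    fix n
    obtain m where m: "m \<in> A" "n \<le> m" "m < n + L" using L(2) by blast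
    have "k m \<le> K" using assms(2) m(1) by blast
    then show "\<exists>m\<in>(\<lambda>n. n + k n) ` A. n \<le> m \<and> m < n + (L + K)"
      using m by (intro bexI[of _ "m + k m"]) auto
  qed (use L in auto)
qed

lemma funpow_in: "T ` X \<subseteq> X \<Longrightarrow> x \<in> X \<Longrightarrow> (T ^^ n) x \<in> X"
  by (induction n) auto

lemma funpow_cont:
  assumes "continuous_on X T" "T ` X \<subseteq> X"
  shows "continuous_on X (T ^^ n)"
proof (induction n)
  case 0 show ?case by (simp only: funpow.simps(1) continuous_on_id')
next
  case (Suc n)
  have "(T ^^ n) ` X \<subseteq> X" using funpow_in[OF assms(2)] by blast
  then have "continuous_on ((T ^^ n) ` X) T" by (rule continuous_on_subset[OF assms(1)])
  then have "continuous_on X (T o (T ^^ n))" by (rule continuous_on_compose[OF Suc.IH])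
  then show ?case by (simp only: funpow.simps(2))
qed

lemma factor_commute:
  assumes "factor_map X T Y S \<pi>" "T ` X \<subseteq> X" "x \<in> X"
  shows "\<pi> ((T ^^ n) x) = (S ^^ n) (\<pi> x)"
proof (induction n)
  case (Suc n)
  have xn: "(T ^^ n) x \<in> X" using funpow_in[OF assms(2,3)] .
  have c: "\<forall>x\<in>X. \<pi> (T x) = S (\<pi> x)" using assms(1) unfolding factor_map_def by blast
  have "\<pi> ((T ^^ Suc n) x) = \<pi> (T ((T ^^ n) x))" by (simp only: funpow.simps(2) comp_apply)
  also have "\<dots> = S (\<pi> ((T ^^ n) x))" using c xn by blast
  also have "\<dots> = S ((S ^^ n) (\<pi> x))" by (simp only: Suc.IH)
  also have "\<dots> = (S ^^ Suc n) (\<pi> x)" by (simp only: funpow.simps(2) comp_apply)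
  finally show ?case .
qed (simp only: funpow.simps(1) id_apply)

lemma fiber_nbhd:
  fixes \<pi> :: "'a::metric_space \<Rightarrow> 'b::metric_space"
  assumes "compact X" "continuous_on X \<pi>" "x0 \<in> X" "\<And>x. x \<in> X \<Longrightarrow> \<pi> x = \<pi> x0 \<Longrightarrow> x = x0"
    "open Op" "x0 \<in> Op"
  shows "\<exists>\<eta>>0. \<forall>x\<in>X. dist (\<pi> x) (\<pi> x0) < \<eta> \<longrightarrow> x \<in> Op"
proof -
  have c: "compact (X \<inter> - Op)" using assms(1,5) by (simp add: compact_Int_closed closed_Compl)
  have "compact (\<pi> ` (X \<inter> - Op))"
    by (rule compact_continuous_image[OF continuous_on_subset[OF assms(2)] c]) auto
  then have "closed (\<pi> ` (X \<inter> - Op))" by (rule compact_imp_closed)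
  moreover have "\<pi> x0 \<notin> \<pi> ` (X \<inter> - Op)" using assms(4,6) by auto
  ultimately have "open (- (\<pi> ` (X \<inter> - Op)))" "\<pi> x0 \<in> - (\<pi> ` (X \<inter> - Op))" by auto
  then obtain e where "e > 0" "ball (\<pi> x0) e \<subseteq> - (\<pi> ` (X \<inter> - Op))"
    using open_contains_ball by blast
  then show ?thesis
  proof (intro exI[of _ e] conjI ballI impI)
    fix x assume "x \<in> X" "dist (\<pi> x) (\<pi> x0) < e"
    then have "\<pi> x \<in> ball (\<pi> x0) e" by (simp add: dist_commute)
    then have "\<pi> x \<notin> \<pi> ` (X \<inter> - Op)" using \<open>ball (\<pi> x0) e \<subseteq> _\<close> by blast
    then show "x \<in> Op" using \<open>x \<in> X\<close> by blast
  qed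
qed

lemma spread:
  assumes "minimal_system X T"
    and "\<And>e. e > 0 \<Longrightarrow> \<exists>V. openin (top_of_set X) V \<and> V \<noteq> {} \<and> syndetic (J_set T V e)"
  shows "synd_equicont X T"
  unfolding synd_equicont_def synd_equicont_point_def
proof (intro ballI allI impI)
  fix x and e :: real
  assume x: "x \<in> X" and e: "e > 0"
  have TX: "T ` X \<subseteq> X" and cT: "continuous_on X T"
    and dense: "\<forall>x\<in>X. X \<subseteq> closure {(T ^^ n) x | n. True}"
    using assms(1) unfolding minimal_system_def dyn_system_def by auto
  obtain V where V: "openin (top_of_set X) V" "V \<noteq> {}" "syndetic (J_set T V e)"
    using assms(2)[OF e] by blast
  obtain Op where Op: "open Op" "V = X \<inter> Op" using V(1) openin_open by blast
  obtain v where v: "v \<in> V" using V(2) by blast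
  have "v \<in> closure {(T ^^ n) x | n. True}" using dense x v Op(2) by blast
  then have "Op \<inter> {(T ^^ n) x | n. True} \<noteq> {}"
    using open_Int_closure_eq_empty[OF Op(1)] v Op(2) by blast
  then obtain k where k: "(T ^^ k) x \<in> Op" by blast
  have kV: "(T ^^ k) x \<in> V" using k Op(2) funpow_in[OF TX x] by blast
  define W where "W = X \<inter> (T ^^ k) -` V"
  have Wo: "openin (top_of_set X) W" unfolding W_def
    by (rule continuous_openin_preimage[OF funpow_cont[OF cT TX] _ V(1)])
       (use funpow_in[OF TX] in blast)
  have xW: "x \<in> W" using x kV unfolding W_def by blast
  have WX: "W \<subseteq> X" unfolding W_def by blast
  have nb: "nbhd_in X x W" unfolding nbhd_in_def
    using Wo xW WX by blast
  have "(\<lambda>n. n + k) ` J_set T V e \<subseteq> J_set T W e"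
  proof
    fix m assume "m \<in> (\<lambda>n. n + k) ` J_set T V e"
    then obtain n where n: "n \<in> J_set T V e" "m = n + k" by blast
    have nS: "n \<notin> S_set T V e" using n(1) unfolding J_set_def by blast
    have eqm: "(T ^^ m) z = (T ^^ n) ((T ^^ k) z)" for z
      by (simp add: n(2) funpow_add)
    have "m \<notin> S_set T W e"
    proof
      assume "m \<in> S_set T W e"
      then obtain x1 x2 where x12: "x1 \<in> W" "x2 \<in> W" "e < dist ((T ^^ m) x1) ((T ^^ m) x2)"
        unfolding S_set_def by blast
      have "(T ^^ k) x1 \<in> V" "(T ^^ k) x2 \<in> V" using x12(1,2) unfolding W_def by auto
      moreover have "e < dist ((T ^^ n) ((T ^^ k) x1)) ((T ^^ n) ((T ^^ k) x2))"
        using x12(3) unfolding eqm .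
      ultimately have "n \<in> S_set T V e" unfolding S_set_def by blast
      then show False using nS by contradiction
    qed
    then show "m \<in> J_set T W e" unfolding J_set_def by blast
  qed
  moreover have "syndetic ((\<lambda>n. n + k) ` J_set T V e)"
    using syndetic_shift[OF V(3), of "\<lambda>_. k" k] by simp
  ultimately show "\<exists>U. nbhd_in X x U \<and> syndetic (J_set T U e)"
    using nb syndetic_mono by blast
qed

lemma uc_iter:
  assumes "compact Y" "continuous_on Y S" "S ` Y \<subseteq> Y" "(e::real) > 0"
  shows "\<exists>\<delta>>0. \<forall>k\<le>K. \<forall>y1\<in>Y. \<forall>y2\<in>Y. dist y1 y2 < \<delta> \<longrightarrow> dist ((S ^^ k) y1) ((S ^^ k) y2) < e"
proof (induction K)
  case 0
  show ?case using assms(4) by (intro exI[of _ e]) auto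
next
  case (Suc K)
  obtain d1 where d1: "d1 > 0" "\<forall>k\<le>K. \<forall>y1\<in>Y. \<forall>y2\<in>Y. dist y1 y2 < d1 \<longrightarrow> dist ((S ^^ k) y1) ((S ^^ k) y2) < e"
    using Suc by blast
  have "uniformly_continuous_on Y (S ^^ Suc K)"
    using compact_uniformly_continuous[OF funpow_cont[OF assms(2,3)] assms(1)] .
  then obtain d2 where d2: "d2 > 0" "\<forall>y1\<in>Y. \<forall>y2\<in>Y. dist y2 y1 < d2 \<longrightarrow> dist ((S ^^ Suc K) y2) ((S ^^ Suc K) y1) < e"
    unfolding uniformly_continuous_on_def using assms(4) by blast
  show ?case
  proof (intro exI[of _ "min d1 d2"] conjI allI impI ballI)
    fix k y1 y2 assume k: "k \<le> Suc K" and y: "y1 \<in> Y" "y2 \<in> Y" and dd: "dist y1 y2 < min d1 d2"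
    show "dist ((S ^^ k) y1) ((S ^^ k) y2) < e"
    proof (cases "k = Suc K")
      case True then show ?thesis using d2(2) y dd by (simp add: dist_commute)
    next
      case False then have "k \<le> K" using k by simp
      then show ?thesis using d1(2) y dd by simp
    qed
  qed (use d1 d2 in auto)
qed

theorem proposition4p9:
  fixes X :: "'a::metric_space set" and T :: "'a \<Rightarrow> 'a"
    and Y :: "'b::metric_space set" and S :: "'b \<Rightarrow> 'b"
    and \<pi> :: "'a \<Rightarrow> 'b"
  assumes "minimal_system X T" and "minimal_system Y S"
    and "almost_one_to_one X T Y S \<pi>"
  shows "synd_equicont X T \<longleftrightarrow> synd_equicont Y S"
proof -
  have cX: "compact X" and cT: "continuous_on X T" and TX: "T ` X \<subseteq> X"
    using assms(1) unfolding minimal_system_def dyn_system_def by auto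
  have cY: "compact Y" and cS: "continuous_on Y S" and SY: "S ` Y \<subseteq> Y"
    and denseY: "\<forall>y\<in>Y. Y \<subseteq> closure {(S ^^ n) y | n. True}"
    using assms(2) unfolding minimal_system_def dyn_system_def by auto
  have fm: "factor_map X T Y S \<pi>" and c\<pi>: "continuous_on X \<pi>" and \<pi>X: "\<pi> ` X = Y"
    and sing: "Y \<subseteq> closure {y\<in>Y. \<exists>!x. x \<in> X \<and> \<pi> x = y}"
    using assms(3) unfolding almost_one_to_one_def factor_map_def by auto
  have comm: "\<And>x n. x \<in> X \<Longrightarrow> \<pi> ((T ^^ n) x) = (S ^^ n) (\<pi> x)"
    using factor_commute[OF fm TX] by blast
  show ?thesis
  proof (cases "X = {}")
    case True
    then have "Y = {}" using \<pi>X by auto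
    then show ?thesis using True unfolding synd_equicont_def by simp
  next
    case False
    then obtain y' where "y' \<in> Y" using \<pi>X by blast
    have "{y\<in>Y. \<exists>!x. x \<in> X \<and> \<pi> x = y} \<noteq> {}" 
    proof
      assume E: "{y\<in>Y. \<exists>!x. x \<in> X \<and> \<pi> x = y} = {}"
      have "Y \<subseteq> closure {}" using sing unfolding E .
      then have "Y \<subseteq> {}" by simp
      then show False using \<open>y' \<in> Y\<close> by blast
    qed
    then obtain x0 where x0: "x0 \<in> X" and uniq: "\<And>x. x \<in> X \<Longrightarrow> \<pi> x = \<pi> x0 \<Longrightarrow> x = x0"
      by blast
    define y0 where "y0 = \<pi> x0"
    have y0: "y0 \<in> Y" using x0 \<pi>X y0_def by blast
    show ?thesis
    proof
      assume SEX: "synd_equicont X T"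
      show "synd_equicont Y S"
      proof (rule spread[OF assms(2)])
        fix e :: real assume e: "e > 0"
        obtain d where d: "d > 0" "\<forall>x\<in>X. \<forall>x'\<in>X. dist x' x < d \<longrightarrow> dist (\<pi> x') (\<pi> x) < e"
          using compact_uniformly_continuous[OF c\<pi> cX] e unfolding uniformly_continuous_on_def by blast
        obtain U where U: "nbhd_in X x0 U" "syndetic (J_set T U (d/2))"
        proof -
          have "synd_equicont_point X T x0" using SEX x0 unfolding synd_equicont_def by blast
          moreover have "d/2 > 0" using d(1) by simp
          ultimately show ?thesis using that unfolding synd_equicont_point_def by blast
        qed
        obtain V0 where V0: "openin (top_of_set X) V0" "x0 \<in> V0" "V0 \<subseteq> U" "U \<subseteq> X"
          using U(1) unfolding nbhd_in_def by blast
        obtain Op where Op: "open Op" "V0 = X \<inter> Op" using V0(1) openin_open by blast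
        obtain \<eta> where \<eta>: "\<eta> > 0" "\<forall>x\<in>X. dist (\<pi> x) (\<pi> x0) < \<eta> \<longrightarrow> x \<in> Op"
          using fiber_nbhd[OF cX c\<pi> x0 uniq Op(1)] V0(2) Op(2) by blast
        define V where "V = Y \<inter> ball y0 \<eta>"
        have Vo: "openin (top_of_set Y) V" unfolding V_def openin_open by blast
        have Vne: "V \<noteq> {}" using y0 \<eta>(1) V_def by auto
        have "J_set T U (d/2) \<subseteq> J_set S V e"
        proof
          fix n assume n: "n \<in> J_set T U (d/2)"
          show "n \<in> J_set S V e" unfolding J_set_def S_set_def
          proof (clarsimp)
            fix y1 y2 assume y1: "y1 \<in> V" and y2: "y2 \<in> V" and gt: "e < dist ((S ^^ n) y1) ((S ^^ n) y2)"
            obtain x1 where x1: "x1 \<in> X" "\<pi> x1 = y1" using y1 \<pi>X V_def by auto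
            obtain x2 where x2: "x2 \<in> X" "\<pi> x2 = y2" using y2 \<pi>X V_def by auto
            have "x1 \<in> U" using \<eta>(2) x1 y1 V0 Op unfolding V_def y0_def by (auto simp: dist_commute)
            moreover have "x2 \<in> U" using \<eta>(2) x2 y2 V0 Op unfolding V_def y0_def by (auto simp: dist_commute)
            moreover have "n \<notin> S_set T U (d/2)" using n unfolding J_set_def by blast
            ultimately have "\<not> (d/2 < dist ((T ^^ n) x1) ((T ^^ n) x2))"
              unfolding S_set_def by blast
            then have "dist ((T ^^ n) x1) ((T ^^ n) x2) \<le> d/2" by linarith
            then have "dist ((T ^^ n) x1) ((T ^^ n) x2) < d" using d(1) by linarith
            then have "dist (\<pi> ((T ^^ n) x1)) (\<pi> ((T ^^ n) x2)) < e"
              using d(2) funpow_in[OF TX] x1 x2 by blast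
            then show False using gt comm x1 x2 by simp
          qed
        qed
        then show "\<exists>V. openin (top_of_set Y) V \<and> V \<noteq> {} \<and> syndetic (J_set S V e)"
          using Vo Vne U(2) syndetic_mono by blast
      qed
    next
      assume SEY: "synd_equicont Y S"
      show "synd_equicont X T"
      proof (rule spread[OF assms(1)])
        fix e :: real assume e: "e > 0"
        obtain \<eta> where \<eta>: "\<eta> > 0" "\<forall>x\<in>X. dist (\<pi> x) (\<pi> x0) < \<eta> \<longrightarrow> x \<in> ball x0 (e/2)"
          using fiber_nbhd[OF cX c\<pi> x0 uniq, of "ball x0 (e/2)"] e by auto
        have "\<forall>k. \<exists>A. open A \<and> A \<inter> Y = (S ^^ k) -` ball y0 (\<eta>/4) \<inter> Y"
          using funpow_cont[OF cS SY] unfolding continuous_on_open_invariant by blast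
        then obtain A where A0: "\<forall>k. open (A k) \<and> A k \<inter> Y = (S ^^ k) -` ball y0 (\<eta>/4) \<inter> Y"
          by (rule choice[THEN exE]) blast
        have A: "\<And>k. open (A k)" "\<And>k. A k \<inter> Y = (S ^^ k) -` ball y0 (\<eta>/4) \<inter> Y"
          using A0 by auto
        have cover: "Y \<subseteq> (\<Union>k\<in>UNIV. A k)"
        proof
          fix z assume z: "z \<in> Y"
          have "y0 \<in> closure {(S ^^ n) z | n. True}" using denseY z y0 by blast
          then have "ball y0 (\<eta>/4) \<inter> {(S ^^ n) z | n. True} \<noteq> {}"
          proof -
            have "y0 \<in> ball y0 (\<eta>/4)" using \<eta>(1) by simp
            then have "ball y0 (\<eta>/4) \<inter> closure {(S ^^ n) z | n. True} \<noteq> {}"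
              using \<open>y0 \<in> closure _\<close> by blast
            then show ?thesis
              using open_Int_closure_eq_empty[of "ball y0 (\<eta>/4)" "{(S ^^ n) z | n. True}"] by simp
          qed
          then obtain k where "(S ^^ k) z \<in> ball y0 (\<eta>/4)" by blast
          then have "z \<in> A k" using A(2)[of k] z by blast
          then show "z \<in> (\<Union>k\<in>UNIV. A k)" by blast
        qed
        obtain C where C: "finite C" "Y \<subseteq> (\<Union>k\<in>C. A k)"
        proof -
          obtain C' where "C' \<subseteq> UNIV" "finite C'" "Y \<subseteq> (\<Union>k\<in>C'. A k)"
            by (rule compactE_image[OF cY, of UNIV A]) (use A(1) cover in auto)
          then show ?thesis using that by blast
        qed
        define K where "K = Max (insert 0 C)"
        have Kr: "\<forall>z\<in>Y. \<exists>k\<le>K. dist ((S ^^ k) z) y0 < \<eta>/4"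
        proof
          fix z assume z: "z \<in> Y"
          then obtain k where k: "k \<in> C" "z \<in> A k" using C(2) by blast
          then have "k \<le> K" unfolding K_def using C(1) by simp
          moreover have "(S ^^ k) z \<in> ball y0 (\<eta>/4)" using A(2)[of k] z k by blast
          ultimately show "\<exists>k\<le>K. dist ((S ^^ k) z) y0 < \<eta>/4" by (auto simp: dist_commute)
        qed
        obtain \<delta> where \<delta>: "\<delta> > 0" "\<forall>k\<le>K. \<forall>y1\<in>Y. \<forall>y2\<in>Y. dist y1 y2 < \<delta> \<longrightarrow> dist ((S ^^ k) y1) ((S ^^ k) y2) < \<eta>/4"
          using uc_iter[OF cY cS SY, of "\<eta>/4" K] \<eta>(1) by auto
        obtain U where U: "nbhd_in Y y0 U" "syndetic (J_set S U (\<delta>/2))"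
        proof -
          have "synd_equicont_point Y S y0" using SEY y0 unfolding synd_equicont_def by blast
          moreover have "\<delta>/2 > 0" using \<delta>(1) by simp
          ultimately show ?thesis using that unfolding synd_equicont_point_def by blast
        qed
        obtain V0 where V0: "openin (top_of_set Y) V0" "y0 \<in> V0" "V0 \<subseteq> U" "U \<subseteq> Y"
          using U(1) unfolding nbhd_in_def by blast
        define W where "W = X \<inter> \<pi> -` V0"
        have Wo: "openin (top_of_set X) W" unfolding W_def
          by (rule continuous_openin_preimage[OF c\<pi> _ V0(1)]) (use \<pi>X in blast)
        have Wne: "W \<noteq> {}" using x0 V0(2) y0_def W_def by blast
        define kf where "kf n = (SOME k. k \<le> K \<and> dist ((S ^^ k) ((S ^^ n) y0)) y0 < \<eta>/4)" for n
        have kf: "kf n \<le> K \<and> dist ((S ^^ kf n) ((S ^^ n) y0)) y0 < \<eta>/4" for n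
        proof -
          have "(S ^^ n) y0 \<in> Y" using funpow_in[OF SY y0] .
          then have "\<exists>k. k \<le> K \<and> dist ((S ^^ k) ((S ^^ n) y0)) y0 < \<eta>/4" using Kr by blast
          then show ?thesis unfolding kf_def by (rule someI_ex)
        qed
        have "(\<lambda>n. n + kf n) ` J_set S U (\<delta>/2) \<subseteq> J_set T W e"
        proof
          fix m assume "m \<in> (\<lambda>n. n + kf n) ` J_set S U (\<delta>/2)"
          then obtain n where n: "n \<in> J_set S U (\<delta>/2)" "m = n + kf n" by blast
          have close: "dist x0 ((T ^^ m) x) < e/2" if x: "x \<in> W" for x
          proof -
            have xX: "x \<in> X" and xU: "\<pi> x \<in> U" using x V0 W_def by auto
            have y0U: "y0 \<in> U" using V0 by blast
            have "n \<notin> S_set S U (\<delta>/2)" using n(1) unfolding J_set_def by blast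
            then have "\<not> (\<delta>/2 < dist ((S ^^ n) (\<pi> x)) ((S ^^ n) y0))"
              using xU y0U unfolding S_set_def by blast
            then have "dist ((S ^^ n) (\<pi> x)) ((S ^^ n) y0) \<le> \<delta>/2" by linarith
            then have "dist ((S ^^ n) (\<pi> x)) ((S ^^ n) y0) < \<delta>" using \<delta>(1) by linarith
            moreover have "(S ^^ n) (\<pi> x) \<in> Y" "(S ^^ n) y0 \<in> Y"
              using funpow_in[OF SY] xX \<pi>X y0 by auto
            ultimately have d1: "dist ((S ^^ kf n) ((S ^^ n) (\<pi> x))) ((S ^^ kf n) ((S ^^ n) y0)) < \<eta>/4"
              using \<delta>(2) kf[of n] by blast
            have eq: "\<pi> ((T ^^ m) x) = (S ^^ kf n) ((S ^^ n) (\<pi> x))"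
            proof -
              have mm: "m = kf n + n" using n(2) by simp
              have "(S ^^ m) = (S ^^ kf n) o (S ^^ n)" unfolding mm by (rule funpow_add)
              then show ?thesis using comm[OF xX, of m] by simp
            qed
            have "dist (\<pi> ((T ^^ m) x)) y0 < \<eta>/4 + \<eta>/4"
            proof -
              have "dist ((S ^^ kf n) ((S ^^ n) (\<pi> x))) y0 \<le> dist ((S ^^ kf n) ((S ^^ n) (\<pi> x))) ((S ^^ kf n) ((S ^^ n) y0)) + dist ((S ^^ kf n) ((S ^^ n) y0)) y0"
                by (rule dist_triangle)
              then show ?thesis unfolding eq using d1 kf[of n] by linarith
            qed
            then have "dist (\<pi> ((T ^^ m) x)) (\<pi> x0) < \<eta>" using \<eta>(1) y0_def by simp
            then have "(T ^^ m) x \<in> ball x0 (e/2)" using \<eta>(2) funpow_in[OF TX xX] by blast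
            then show ?thesis by simp
          qed
          show "m \<in> J_set T W e" unfolding J_set_def S_set_def
          proof (clarsimp)
            fix x1 x2 assume x1: "x1 \<in> W" and x2: "x2 \<in> W" and gt: "e < dist ((T ^^ m) x1) ((T ^^ m) x2)"
            have "dist ((T ^^ m) x1) ((T ^^ m) x2) \<le> dist x0 ((T ^^ m) x1) + dist x0 ((T ^^ m) x2)"
              by (rule dist_triangle3)
            then show False using close[OF x1] close[OF x2] gt by linarith
          qed
        qed
        moreover have "syndetic ((\<lambda>n. n + kf n) ` J_set S U (\<delta>/2))"
          using syndetic_shift[OF U(2), of kf K] kf by blast
        ultimately show "\<exists>V. openin (top_of_set X) V \<and> V \<noteq> {} \<and> syndetic (J_set T V e)"
          using Wo Wne syndetic_mono by blast
      qed
    qed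
  qed
qed

end
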